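(* For $\sigma^2>0$ let $\Phi(\cdot;\sigma^2)$ denote the cumulative distribution function of $\mathcal{N}(0,\sigma^2)$. Fix $\alpha\ge0$ and $\beta^2\in(0,1)$. Let $\lambda_1\ge\lambda_2\ge0$ and $\sigma_1^2,\sigma_2^2\ge1$ satisfy $\lambda_1-\lambda_2\le\alpha$ and $\frac{\sigma_1^2}{\sigma_2^2},\frac{\sigma_2^2}{\sigma_1^2}\in[1-\beta^2,1+\beta^2]$. Let \[ X=\sqrt{\frac{8}{\pi}}\,\frac{\alpha+\beta^2\lambda_1}{\min\{\sigma_1,\sigma_2\}}\exp\Big(-\frac{\lambda_2^2(1-\beta^2)}{2\max\{\sigma_1^2,\sigma_2^2\}}\Big). \] Then both $\frac{\Phi(\lambda_1;\sigma_1^2)}{\Phi(\lambda_2;\sigma_2^2)}$ and $\frac{\Phi(\lambda_2;\sigma_2^2)}{\Phi(\lambda_1;\sigma_1^2)}$ lie in $[1-\beta^2-X,\ 1+\beta^2+X]$. *)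

theory Defs
  imports "HOL-Probability.Probability"
begin

definition normal_cdf :: "real \<Rightarrow> real \<Rightarrow> real" where
  "normal_cdf x v = measure (density lborel (normal_density 0 (sqrt v))) {..x}"

end

theory Submission imports Defs begin

definition Phi :: "real \<Rightarrow> real" where
  "Phi t = (\<integral>x. std_normal_density x * indicator {..t} x \<partial>lborel)"

lemma nd_scale:
  fixes \<sigma> x :: real
  assumes "\<sigma> > 0"
  shows "normal_density 0 \<sigma> (\<sigma> * x) = std_normal_density x / \<sigma>"
  using assms unfolding normal_density_def
  by (simp add: power_mult_distrib real_sqrt_mult field_simps)

lemma ind_scale:
  fixes \<sigma> x l :: real
  assumes "\<sigma> > 0"
  shows "indicator {..l} (\<sigma> * x) = (indicator {..l/\<sigma>} x :: real)"
  using pos_le_divide_eq[OF assms, of x l] by (auto simp: indicator_def mult.commute)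

lemma cdf_eq:
  assumes "s > 0"
  shows "normal_cdf l s = Phi (l / sqrt s)"
proof -
  define \<sigma> where "\<sigma> = sqrt s"
  have sp: "\<sigma> > 0" using assms by (simp add: \<sigma>_def)
  have "normal_cdf l s = integral\<^sup>L (density lborel (normal_density 0 \<sigma>)) (indicator {..l})"
    unfolding normal_cdf_def \<sigma>_def by simp
  also have "\<dots> = (\<integral>x. normal_density 0 \<sigma> x * indicator {..l} x \<partial>lborel)"
    by (subst integral_density) auto
  also have "\<dots> = \<bar>\<sigma>\<bar> *\<^sub>R (\<integral>x. normal_density 0 \<sigma> (0 + \<sigma> * x) * indicator {..l} (0 + \<sigma> * x) \<partial>lborel)"
    by (rule lborel_integral_real_affine) (use sp in simp)
  also have "\<dots> = \<sigma> * (\<integral>x. (1/\<sigma>) * (std_normal_density x * indicator {..l/\<sigma>} x) \<partial>lborel)"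
    using sp by (simp add: nd_scale ind_scale)
  also have "\<dots> = Phi (l / \<sigma>)"
    using sp unfolding Phi_def by simp
  finally show ?thesis by (simp add: \<sigma>_def)
qed

lemma int_ind: "integrable lborel (\<lambda>x. std_normal_density x * indicator A x)" if "A \<in> sets borel"
  using that by (intro integrable_real_mult_indicator) auto

lemma Phi_mono: "a \<le> b \<Longrightarrow> Phi a \<le> Phi b"
  unfolding Phi_def
  by (intro integral_mono int_ind) (auto simp: indicator_def less_le_not_le)

lemma Phi_half: "t \<ge> 0 \<Longrightarrow> Phi t \<ge> 1/2"
proof -
  assume t: "t \<ge> 0"
  have e1: "(\<integral>x. std_normal_density x * indicator {..0} x \<partial>lborel)
      = \<bar>-1\<bar> *\<^sub>R (\<integral>x. std_normal_density (0 + -1 * x) * indicator {..0::real} (0 + -1 * x) \<partial>lborel)"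
    by (rule lborel_integral_real_affine) simp
  also have "\<dots> = (\<integral>x. std_normal_density x * indicator {0..} x \<partial>lborel)"
    by (simp, rule Bochner_Integration.integral_cong[OF refl]) (auto simp: std_normal_density_def indicator_def)
  finally have e: "Phi 0 = (\<integral>x. std_normal_density x * indicator {0..} x \<partial>lborel)"
    unfolding Phi_def .
  have "(\<integral>x. std_normal_density x * indicator {0<..} x \<partial>lborel) \<le> (\<integral>x. std_normal_density x * indicator {0..} x \<partial>lborel)"
    by (intro integral_mono int_ind) (auto simp: indicator_def)
  moreover have "1 = (\<integral>x. std_normal_density x * indicator {..0} x + std_normal_density x * indicator {0<..} x \<partial>lborel)"
  proof -
    have "(\<integral>x. std_normal_density x * indicator {..0} x + std_normal_density x * indicator {0<..} x \<partial>lborel)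
      = (\<integral>x. std_normal_density x \<partial>lborel)"
      by (rule Bochner_Integration.integral_cong[OF refl]) (auto simp: indicator_def)
    then show ?thesis by simp
  qed
  moreover have "\<dots> = Phi 0 + (\<integral>x. std_normal_density x * indicator {0<..} x \<partial>lborel)"
    unfolding Phi_def by (intro Bochner_Integration.integral_add int_ind) auto
  ultimately have "Phi 0 \<ge> 1/2" using e by linarith
  thus ?thesis using Phi_mono[OF t] by linarith
qed

lemma Phi_diff:
  assumes "0 \<le> a" "a \<le> b"
  shows "Phi b - Phi a \<le> (b - a) * std_normal_density a"
proof -
  have "Phi b - Phi a = (\<integral>x. std_normal_density x * indicator {a<..b} x \<partial>lborel)"
    unfolding Phi_def
    apply (subst Bochner_Integration.integral_diff[symmetric])
      apply (rule int_ind, simp)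
     apply (rule int_ind, simp)
    apply (rule Bochner_Integration.integral_cong[OF refl])
    using assms by (auto simp: indicator_def)
  also have "\<dots> \<le> (\<integral>x. std_normal_density a * indicator {a<..b} x \<partial>lborel)"
  proof (intro integral_mono int_ind)
    show "integrable lborel (\<lambda>x. std_normal_density a * indicator {a<..b} x)"
      using assms by (simp add: integrable_indicator_iff emeasure_lborel_Ioc)
    fix x show "std_normal_density x * indicator {a<..b} x \<le> std_normal_density a * indicator {a<..b} x"
    proof (cases "x \<in> {a<..b}")
      case True
      then have "a\<^sup>2 \<le> x\<^sup>2" using assms by (intro power_mono) auto
      then show ?thesis using True by (simp add: std_normal_density_def divide_right_mono)
    qed simp
  qed simp
  also have "\<dots> = (b - a) * std_normal_density a" using assms by simp
  finally show ?thesis .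
qed

lemma sig_bound:
  fixes s1 s2 b2 :: real
  assumes "s1 \<ge> 1" "s2 \<ge> 1" "b2 > 0" "s2 / s1 \<le> 1 + b2" "s1 \<le> s2"
  shows "sqrt s2 - sqrt s1 \<le> b2 * sqrt s1"
proof -
  have "s2 \<le> (1 + b2) * s1" using assms by (simp add: divide_le_eq)
  then have "sqrt s2 \<le> sqrt (1 + b2) * sqrt s1" by (metis real_sqrt_le_iff real_sqrt_mult)
  moreover have "sqrt (1 + b2) \<le> 1 + b2"
  proof -
    have g: "sqrt (1 + b2) \<ge> 1" using assms by simp
    have "sqrt (1 + b2) * 1 \<le> sqrt (1 + b2) * sqrt (1 + b2)"
      using g by (intro mult_left_mono) auto
    then show ?thesis using assms by simp
  qed
  moreover have "sqrt (1 + b2) * sqrt s1 \<le> (1 + b2) * sqrt s1"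
    using calculation(2) by (rule mult_right_mono) (use assms in simp)
  ultimately have "sqrt s2 \<le> (1 + b2) * sqrt s1" by linarith
  then show ?thesis by (simp add: algebra_simps)
qed

lemma sig_bound2:
  fixes s1 s2 b2 :: real
  assumes "s1 \<ge> 1" "s2 \<ge> 1" "b2 > 0" "s2 / s1 \<le> 1 + b2" "s1 / s2 \<le> 1 + b2"
  shows "\<bar>sqrt s2 - sqrt s1\<bar> \<le> b2 * min (sqrt s1) (sqrt s2)"
proof (cases "s1 \<le> s2")
  case True
  then show ?thesis using sig_bound[of s1 s2 b2] assms by (simp add: min_def)
next
  case False
  then show ?thesis using sig_bound[of s2 s1 b2] assms by (simp add: min_def)
qed

lemma t_bound:
  fixes a b2 l1 l2 s1 s2 :: real
  assumes "a \<ge> 0" "0 < b2" "l1 \<ge> l2" "l2 \<ge> 0" "s1 \<ge> 1" "s2 \<ge> 1" "l1 - l2 \<le> a"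
    and "\<bar>sqrt s2 - sqrt s1\<bar> \<le> b2 * min (sqrt s1) (sqrt s2)"
  shows "\<bar>l1 / sqrt s1 - l2 / sqrt s2\<bar> \<le> (a + b2 * l1) / min (sqrt s1) (sqrt s2)"
proof -
  define p q where "p = sqrt s1" "q = sqrt s2"
  have p: "p \<ge> 1" "q \<ge> 1" using assms by (auto simp: p_q_def)
  have h: "\<bar>q - p\<bar> \<le> b2 * min p q" using assms(8) by (simp add: p_q_def)
  have e: "l1 / p - l2 / q = (l1 - l2) / p + l2 * (q - p) / (p * q)"
    using p by (simp add: field_simps)
  have 1: "\<bar>(l1 - l2) / p\<bar> \<le> a / min p q"
  proof -
    have "\<bar>(l1 - l2) / p\<bar> = (l1 - l2) / p" using assms p by simp
    also have "\<dots> \<le> a / p" using assms p by (intro divide_right_mono) auto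
    also have "\<dots> \<le> a / min p q" using assms p by (intro divide_left_mono) auto
    finally show ?thesis .
  qed
  have 2: "\<bar>l2 * (q - p) / (p * q)\<bar> \<le> b2 * l1 / min p q"
  proof -
    have "\<bar>l2 * (q - p) / (p * q)\<bar> = l2 * \<bar>q - p\<bar> / (p * q)" using assms p
      by (simp add: abs_mult)
    also have "\<dots> \<le> l2 * (b2 * min p q) / (p * q)" using assms p h
      by (intro divide_right_mono mult_left_mono) auto
    also have "\<dots> = l2 * b2 / max p q" using p
      by (cases "p \<le> q") (auto simp: min_def max_def field_simps)
    also have "\<dots> \<le> l1 * b2 / min p q" using assms p
      by (intro frac_le mult_right_mono) auto
    finally show ?thesis by (simp add: mult.commute)
  qed
  have "\<bar>l1 / p - l2 / q\<bar> \<le> a / min p q + b2 * l1 / min p q"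
    unfolding e using 1 2 by linarith
  then show ?thesis by (simp add: p_q_def add_divide_distrib)
qed

lemma ratio_bound:
  fixes p q K X b2 :: real
  assumes "p \<ge> 1/2" "q \<ge> 1/2" "\<bar>p - q\<bar> \<le> K" "2 * K \<le> X" "b2 > 0"
  shows "p / q \<in> {1 - b2 - X .. 1 + b2 + X}"
proof -
  have "p / q - 1 = (p - q) / q" using assms by (simp add: field_simps)
  moreover have "\<bar>(p - q) / q\<bar> = \<bar>p - q\<bar> / q" using assms by simp
  moreover have "\<bar>p - q\<bar> / q \<le> \<bar>p - q\<bar> / (1/2)"
    using assms by (intro divide_left_mono) auto
  ultimately have "\<bar>p / q - 1\<bar> \<le> 2 * K" using assms by simp
  then show ?thesis using assms by auto
qed

theorem lemmaB3:
  fixes a b2 l1 l2 s1 s2 :: real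
  assumes "a \<ge> 0" and "0 < b2" and "b2 < 1"
    and "l1 \<ge> l2" and "l2 \<ge> 0"
    and "s1 \<ge> 1" and "s2 \<ge> 1"
    and "l1 - l2 \<le> a"
    and "s1 / s2 \<in> {1 - b2 .. 1 + b2}"
    and "s2 / s1 \<in> {1 - b2 .. 1 + b2}"
  defines "X \<equiv> sqrt (8 / pi) * (a + b2 * l1) / min (sqrt s1) (sqrt s2)
                 * exp (- (l2\<^sup>2 * (1 - b2)) / (2 * max s1 s2))"
  shows "normal_cdf l1 s1 / normal_cdf l2 s2 \<in> {1 - b2 - X .. 1 + b2 + X} \<and>
         normal_cdf l2 s2 / normal_cdf l1 s1 \<in> {1 - b2 - X .. 1 + b2 + X}"
proof -
  define t1 t2 where "t1 = l1 / sqrt s1" "t2 = l2 / sqrt s2"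
  define T where "T = (a + b2 * l1) / min (sqrt s1) (sqrt s2)"
  define E where "E = exp (- (l2\<^sup>2 * (1 - b2)) / (2 * max s1 s2))"
  define K where "K = T * E / sqrt (2 * pi)"
  have P1: "normal_cdf l1 s1 = Phi t1" using assms by (simp add: cdf_eq t1_t2_def)
  have P2: "normal_cdf l2 s2 = Phi t2" using assms by (simp add: cdf_eq t1_t2_def)
  have t0: "t1 \<ge> 0" "t2 \<ge> 0" using assms by (auto simp: t1_t2_def)
  have sb: "\<bar>sqrt s2 - sqrt s1\<bar> \<le> b2 * min (sqrt s1) (sqrt s2)"
    using assms by (intro sig_bound2) auto
  have tb: "\<bar>t1 - t2\<bar> \<le> T"
    unfolding t1_t2_def T_def using assms sb by (intro t_bound) auto
  define m where "m = min t1 t2"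
  have lm: "l2 / sqrt (max s1 s2) \<le> m"
  proof -
    have "l2 / sqrt (max s1 s2) \<le> l2 / sqrt s1" using assms
      by (intro divide_left_mono) auto
    also have "\<dots> \<le> t1" unfolding t1_t2_def using assms by (intro divide_right_mono) auto
    finally have 1: "l2 / sqrt (max s1 s2) \<le> t1" .
    have "l2 / sqrt (max s1 s2) \<le> t2" unfolding t1_t2_def using assms
      by (intro divide_left_mono) auto
    then show ?thesis using 1 by (simp add: m_def)
  qed
  have m2: "l2\<^sup>2 * (1 - b2) / max s1 s2 \<le> m\<^sup>2"
  proof -
    have "l2\<^sup>2 * (1 - b2) / max s1 s2 \<le> l2\<^sup>2 / max s1 s2"
      using assms by (intro divide_right_mono) (auto simp: mult_left_le)
    also have "\<dots> = (l2 / sqrt (max s1 s2))\<^sup>2" using assms by (simp add: power_divide)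
    also have "\<dots> \<le> m\<^sup>2" using lm assms by (intro power_mono) auto
    finally show ?thesis .
  qed
  have phim: "std_normal_density m \<le> E / sqrt (2 * pi)"
    unfolding std_normal_density_def E_def using m2
    by (simp add: divide_right_mono)
  have D: "\<bar>Phi t1 - Phi t2\<bar> \<le> \<bar>t1 - t2\<bar> * std_normal_density m"
  proof (cases "t1 \<le> t2")
    case True
    then show ?thesis using Phi_diff[of t1 t2] Phi_mono[OF True] t0 by (simp add: m_def)
  next
    case False
    then show ?thesis using Phi_diff[of t2 t1] Phi_mono[of t2 t1] t0 by (simp add: m_def)
  qed
  have T0: "T \<ge> 0" unfolding T_def using assms by auto
  have DK: "\<bar>Phi t1 - Phi t2\<bar> \<le> K"
  proof -
    have "\<bar>t1 - t2\<bar> * std_normal_density m \<le> T * (E / sqrt (2 * pi))"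
      using tb phim T0 by (intro mult_mono) auto
    then show ?thesis using D by (simp add: K_def)
  qed
  have XK: "X = 4 * K"
  proof -
    have "sqrt (8 / pi) * sqrt (2 * pi) = 4"
      by (simp add: real_sqrt_mult[symmetric])
    then have "sqrt (8 / pi) = 4 / sqrt (2 * pi)" by (simp add: field_simps)
    then show ?thesis unfolding X_def K_def T_def E_def by (simp add: algebra_simps)
  qed
  have K0: "K \<ge> 0" unfolding K_def E_def using T0 by simp
  show ?thesis unfolding P1 P2
    using ratio_bound[of "Phi t1" "Phi t2" K X b2] ratio_bound[of "Phi t2" "Phi t1" K X b2]
      Phi_half t0 DK XK K0 assms by (auto simp: abs_minus_commute)
qed

end
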